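(* Let $p$ be a prime, let $m\ge 0$ be an integer, and let $f:\mathbb{Z}_p\to\mathbb{Z}_p$ be an arithmetic differential operator of order $m$. Then $f$ is an analytic function of level $m$.
   Context: $\mathbb{Z}_p$ denotes the ring of $p$-adic integers with the $p$-adic norm $|\cdot|_p$, $|p|_p=p^{-1}$. The Fermat quotient operator is $\delta:\mathbb{Z}_p\to\mathbb{Z}_p$, $\delta a=(a-a^p)/p$, and $\delta^i$ denotes its $i$-th iterate. A power series $F=\sum_{\alpha} a_\alpha x^\alpha\in\mathbb{Z}_p[[x_0,\dots,x_k]]$ is called restricted if $a_\alpha\to 0$ $p$-adically as $|\alpha|=\alpha_0+\dots+\alpha_k\to\infty$. A function $f:\mathbb{Z}_p\to\mathbb{Z}_p$ is an arithmetic differential operator of order $m$ if there is a restricted power series $F\in\mathbb{Z}_p[[x_0,\dots,x_m]]$ with $f(a)=F(a,\delta a,\dots,\delta^m a)$ for all $a\in\mathbb{Z}_p$. A function $f:\mathbb{Z}_p\to\mathbb{Z}_p$ is analytic of level $m$ if for every $a\in\mathbb{Z}_p$ there is a restricted power series $F_a\in\mathbb{Z}_p[[x]]$ (one variable) such that $f(a+p^m u)=F_a(u)$ for all $u\in\mathbb{Z}_p$. *)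

theory Defs
  imports Main "HOL-Computational_Algebra.Primes"
begin

text \<open>p-adic integers are represented by their compatible sequences of residues:
  a p-adic integer a is a function n \<mapsto> a mod p^n, with values in {0..<p^n}.\<close>

type_synonym padic_int = "nat \<Rightarrow> int"

definition padic :: "nat \<Rightarrow> padic_int set" where
  "padic p = {a. \<forall>n. 0 \<le> a n \<and> a n < int p ^ n \<and> a (Suc n) mod int p ^ n = a n}"

definition padd :: "nat \<Rightarrow> padic_int \<Rightarrow> padic_int \<Rightarrow> padic_int" where
  "padd p a b = (\<lambda>n. (a n + b n) mod int p ^ n)"

definition pmul :: "nat \<Rightarrow> padic_int \<Rightarrow> padic_int \<Rightarrow> padic_int" where
  "pmul p a b = (\<lambda>n. (a n * b n) mod int p ^ n)"

definition pint :: "nat \<Rightarrow> int \<Rightarrow> padic_int" where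
  "pint p c = (\<lambda>n. c mod int p ^ n)"

text \<open>Fermat quotient delta a = (a - a^p)/p, computed level by level:
  residue mod p^n of (a - a^p)/p is ((a - a^p) mod p^(n+1)) div p.\<close>
definition pdelta :: "nat \<Rightarrow> padic_int \<Rightarrow> padic_int" where
  "pdelta p a = (\<lambda>n. ((a (Suc n) - a (Suc n) ^ p) mod int p ^ Suc n) div int p)"

definition multi_idx :: "nat \<Rightarrow> (nat \<Rightarrow> nat) set" where
  "multi_idx k = {\<alpha>. \<forall>i>k. \<alpha> i = 0}"

definition mdeg :: "nat \<Rightarrow> (nat \<Rightarrow> nat) \<Rightarrow> nat" where
  "mdeg k \<alpha> = (\<Sum>i\<le>k. \<alpha> i)"

text \<open>A power series in x_0..x_k over Z_p is a coefficient function on multi-indices.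
  It is restricted if its coefficients tend to 0 p-adically as |alpha| \<rightarrow> \<infinity>, i.e.
  for each n, a_alpha \<equiv> 0 mod p^n for all alpha of large degree.\<close>
definition restricted :: "nat \<Rightarrow> nat \<Rightarrow> ((nat \<Rightarrow> nat) \<Rightarrow> padic_int) \<Rightarrow> bool" where
  "restricted p k F \<longleftrightarrow> (\<forall>\<alpha>\<in>multi_idx k. F \<alpha> \<in> padic p) \<and>
     (\<forall>n. \<exists>N. \<forall>\<alpha>\<in>multi_idx k. mdeg k \<alpha> \<ge> N \<longrightarrow> F \<alpha> n = 0)"

definition ps_partial :: "nat \<Rightarrow> nat \<Rightarrow> ((nat \<Rightarrow> nat) \<Rightarrow> padic_int) \<Rightarrow> (nat \<Rightarrow> padic_int)
    \<Rightarrow> nat \<Rightarrow> nat \<Rightarrow> int" where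
  "ps_partial p k F x N n =
     (\<Sum>\<alpha>\<in>{\<alpha>\<in>multi_idx k. mdeg k \<alpha> < N}. F \<alpha> n * (\<Prod>i\<le>k. x i n ^ \<alpha> i)) mod int p ^ n"

definition ps_sums :: "nat \<Rightarrow> nat \<Rightarrow> ((nat \<Rightarrow> nat) \<Rightarrow> padic_int) \<Rightarrow> (nat \<Rightarrow> padic_int)
    \<Rightarrow> padic_int \<Rightarrow> bool" where
  "ps_sums p k F x y \<longleftrightarrow> y \<in> padic p \<and>
     (\<forall>n. \<exists>N. \<forall>N'\<ge>N. y n = ps_partial p k F x N' n)"

definition arith_diff_op :: "nat \<Rightarrow> nat \<Rightarrow> (padic_int \<Rightarrow> padic_int) \<Rightarrow> bool" where
  "arith_diff_op p m f \<longleftrightarrow> (\<exists>F. restricted p m F \<and>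
     (\<forall>a\<in>padic p. ps_sums p m F (\<lambda>i. (pdelta p ^^ i) a) (f a)))"

definition analytic_level :: "nat \<Rightarrow> nat \<Rightarrow> (padic_int \<Rightarrow> padic_int) \<Rightarrow> bool" where
  "analytic_level p m f \<longleftrightarrow> (\<forall>a\<in>padic p. \<exists>G. restricted p 0 G \<and>
     (\<forall>u\<in>padic p. ps_sums p 0 G (\<lambda>_. u) (f (padd p a (pmul p (pint p (int p ^ m)) u)))))"

end

theory Submission
  imports Defs "HOL-Computational_Algebra.Polynomial" "HOL-Number_Theory.Cong" "HOL-Library.FuncSet"
begin


lemma binom_step:
  assumes "prime p" shows "int p dvd (x + 1::int) ^ p - x ^ p - 1"
proof -
  have p0: "p > 0" using assms prime_gt_0_nat by blast
  define g where "g k = of_nat (p choose k) * x ^ k" for k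
  have "(x + 1) ^ p = (\<Sum>k\<le>p. of_nat (p choose k) * x ^ k * 1 ^ (p - k))"
    by (rule binomial_ring)
  also have "\<dots> = sum g {..p}" by (simp add: g_def)
  also have "\<dots> = sum g {0,p} + sum g ({..p} - {0,p})"
    by (subst sum.subset_diff[of "{0,p}"]) auto
  finally have e: "(x + 1) ^ p - x ^ p - 1 = sum g ({..p} - {0,p})"
    using p0 by (simp add: g_def)
  have "int p dvd sum g ({..p} - {0,p})"
  proof (rule dvd_sum)
    fix k assume "k \<in> {..p} - {0,p}"
    then have "p dvd (p choose k)" using assms by (intro dvd_choose_prime) auto
    then show "int p dvd g k" unfolding g_def by (simp add: int_dvd_int_iff)
  qed
  then show ?thesis using e by simp
qed

lemma fermat_nat: assumes "prime p" shows "int p dvd int x ^ p - int x"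
proof (induction x)
  case 0 then show ?case using assms prime_gt_0_nat by (simp add: zero_power)
next
  case (Suc x)
  have "int (Suc x) ^ p - int (Suc x) = ((int x + 1) ^ p - int x ^ p - 1) + (int x ^ p - int x)"
    by (simp add: add.commute)
  then show ?case using binom_step[OF assms, of "int x"] Suc by (metis dvd_add)
qed

lemma fermat_int:
  assumes "prime p" shows "int p dvd (c::int) - c ^ p"
proof -
  have p0: "p > 0" using assms prime_gt_0_nat by blast
  define r where "r = nat (c mod int p)"
  have cr: "[c = int r] (mod int p)"
    using p0 by (simp add: r_def cong_def)
  have "[int r ^ p = int r] (mod int p)"
    using fermat_nat[OF assms, of r] by (simp add: cong_iff_dvd_diff)
  moreover have "[c ^ p = int r ^ p] (mod int p)" using cr by (rule cong_pow)
  ultimately have "[c ^ p = c] (mod int p)"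
    using cr by (meson cong_sym cong_trans)
  then show ?thesis
    by (simp add: cong_iff_dvd_diff dvd_diff_commute)
qed



definition pcong :: "int \<Rightarrow> int poly \<Rightarrow> int poly \<Rightarrow> bool" where
  "pcong M S T \<longleftrightarrow> (\<exists>Q. S - T = smult M Q)"

lemma pcong_refl: "pcong M S S"
  unfolding pcong_def by (rule exI[of _ 0]) simp

lemma pcong_sym: "pcong M S T \<Longrightarrow> pcong M T S"
  unfolding pcong_def by (metis minus_diff_eq smult_minus_right)

lemma pcong_trans: "pcong M S T \<Longrightarrow> pcong M T U \<Longrightarrow> pcong M S U"
  unfolding pcong_def
proof (elim exE)
  fix Q R assume "S - T = smult M Q" "T - U = smult M R"
  then have "S - U = smult M (Q + R)" by (metis diff_add_eq diff_add_cancel smult_add_right add_diff_eq)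
  then show "\<exists>Q. S - U = smult M Q" by blast
qed

lemma pcong_add: "pcong M S T \<Longrightarrow> pcong M S' T' \<Longrightarrow> pcong M (S + S') (T + T')"
  unfolding pcong_def
proof (elim exE)
  fix Q R assume "S - T = smult M Q" "S' - T' = smult M R"
  then have "S + S' - (T + T') = smult M (Q + R)" by (simp add: smult_add_right algebra_simps)
  then show "\<exists>Q. S + S' - (T + T') = smult M Q" by blast
qed

lemma pcong_diff: "pcong M S T \<Longrightarrow> pcong M S' T' \<Longrightarrow> pcong M (S - S') (T - T')"
  unfolding pcong_def
proof (elim exE)
  fix Q R assume "S - T = smult M Q" "S' - T' = smult M R"
  then have "S - S' - (T - T') = smult M (Q - R)" by (simp add: smult_diff_right algebra_simps)
  then show "\<exists>Q. S - S' - (T - T') = smult M Q" by blast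
qed

lemma pcong_mult: "pcong M S T \<Longrightarrow> pcong M S' T' \<Longrightarrow> pcong M (S * S') (T * T')"
  unfolding pcong_def
proof (elim exE)
  fix Q R assume a: "S - T = smult M Q" "S' - T' = smult M R"
  have "S * S' - T * T' = (S - T) * S' + T * (S' - T')" by (simp add: algebra_simps)
  also have "\<dots> = smult M (Q * S' + T * R)" using a by (simp add: smult_add_right)
  finally show "\<exists>Q. S * S' - T * T' = smult M Q" by blast
qed

lemma pcong_power: "pcong M S T \<Longrightarrow> pcong M (S ^ k) (T ^ k)"
  by (induction k) (auto simp: pcong_refl intro: pcong_mult)

lemma pcong_smult: "pcong M S T \<Longrightarrow> pcong M (smult c S) (smult c T)"
  unfolding pcong_def
proof (elim exE)
  fix Q assume a: "S - T = smult M Q"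
  have "smult c S - smult c T = smult c (S - T)" by (simp add: smult_diff_right)
  also have "\<dots> = smult M (smult c Q)" using a by (simp add: mult.commute)
  finally show "\<exists>Q. smult c S - smult c T = smult M Q" by blast
qed

lemma pcong_smult2: "[c = d] (mod M) \<Longrightarrow> pcong M (smult c S) (smult d S)"
  unfolding pcong_def
proof -
  assume "[c = d] (mod M)"
  then obtain k where k: "c - d = M * k" by (metis cong_iff_dvd_diff dvd_def)
  have "smult c S - smult d S = smult (c - d) S" by (simp add: smult_diff_left)
  also have "\<dots> = smult M (smult k S)" using k by simp
  finally show "\<exists>Q. smult c S - smult d S = smult M Q" by blast
qed

lemma pcong_sum: "(\<And>x. x \<in> A \<Longrightarrow> pcong M (f x) (g x)) \<Longrightarrow> pcong M (sum f A) (sum g A)"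
  by (induction A rule: infinite_finite_induct) (auto simp: pcong_refl intro: pcong_add)

lemma pcong_prod: "(\<And>x. x \<in> A \<Longrightarrow> pcong M (f x) (g x)) \<Longrightarrow> pcong M (prod f A) (prod g A)"
  by (induction A rule: infinite_finite_induct) (auto simp: pcong_refl intro: pcong_mult)

lemma pcong_dvd: "pcong M S T \<Longrightarrow> M' dvd M \<Longrightarrow> pcong M' S T"
  unfolding pcong_def
proof (elim exE)
  fix Q assume a: "S - T = smult M Q" and "M' dvd M"
  then obtain k where "M = M' * k" by (auto simp: dvd_def)
  then have "S - T = smult M' (smult k Q)" using a by simp
  then show "\<exists>Q. S - T = smult M' Q" by blast
qed

lemma pcong_coeff: "pcong M S T \<Longrightarrow> [coeff S j = coeff T j] (mod M)"
  unfolding pcong_def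
proof (elim exE)
  fix Q assume a: "S - T = smult M Q"
  have "coeff S j - coeff T j = M * coeff Q j" using arg_cong[OF a, of "\<lambda>P. coeff P j"] by simp
  then show ?thesis by (metis cong_iff_dvd_diff dvd_triv_left)
qed

lemma pcong_cancel: assumes "pcong (c * M) (smult c S) (smult c T)" "c \<noteq> 0"
  shows "pcong M S T"
proof -
  obtain Q where "smult c S - smult c T = smult (c * M) Q" using assms unfolding pcong_def by blast
  then have "smult c (S - T) = smult c (smult M Q)" by (simp add: smult_diff_right)
  then have "S - T = smult M Q" using assms(2)
    by (metis add_diff_cancel_left' diff_add_cancel smult_diff_right smult_eq_0_iff)
  then show ?thesis unfolding pcong_def by blast
qed

lemma poly_cong: "[x = y] (mod M) \<Longrightarrow> [poly S x = poly S y] (mod (M::int))"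
proof (induction S)
  case 0 then show ?case by simp
next
  case (pCons a S)
  then have "[poly S x = poly S y] (mod M)" by blast
  then have "[a + x * poly S x = a + y * poly S y] (mod M)"
    using pCons.prems by (intro cong_add cong_mult) auto
  then show ?case by simp
qed

lemma map_div_smult: assumes "(c::int) \<noteq> 0" shows "map_poly (\<lambda>x. x div c) (smult c E) = E"
  by (rule poly_eqI) (simp add: coeff_map_poly assms)



lemma key_step:
  assumes "prime p" "k \<ge> 1" "S = [:c:] + smult (int p ^ k) Q"
  shows "\<exists>c' Q'. S - S ^ p = smult (int p) ([:c':] + smult (int p ^ (k - 1)) Q')"
proof -
  define T where "T = (\<Sum>i<p. [:c:] ^ (p - Suc i) * S ^ i)"
  have "S ^ p - [:c:] ^ p = (S - [:c:]) * T" unfolding T_def by (rule power_diff_sumr2)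
  also have "S - [:c:] = smult (int p ^ k) Q" using assms(3) by simp
  finally have e1: "S ^ p = [:c ^ p:] + smult (int p ^ k) (Q * T)"
    by (simp add: poly_const_pow algebra_simps)
  obtain d where d: "c - c ^ p = int p * d" using fermat_int[OF assms(1), of c] by (auto simp: dvd_def)
  have pk: "int p ^ k = int p * int p ^ (k - 1)" using assms(2)
    by (metis Suc_diff_le diff_Suc_1 power_Suc)
  have "S - S ^ p = [:c - c ^ p:] + smult (int p ^ k) (Q - Q * T)"
    using e1 assms(3) by (simp add: smult_diff_right algebra_simps)
  also have "\<dots> = smult (int p) ([:d:] + smult (int p ^ (k - 1)) (Q - Q * T))"
    unfolding d pk by (simp add: smult_add_right)
  finally show ?thesis by blast
qed



fun Sp :: "nat \<Rightarrow> nat \<Rightarrow> padic_int \<Rightarrow> nat \<Rightarrow> nat \<Rightarrow> int poly" where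
  "Sp p m a 0 n = [:a n, int p ^ m:]"
| "Sp p m a (Suc i) n = map_poly (\<lambda>x. x div int p) (Sp p m a i (Suc n) - Sp p m a i (Suc n) ^ p)"

definition bb :: "nat \<Rightarrow> nat \<Rightarrow> padic_int \<Rightarrow> padic_int \<Rightarrow> padic_int" where
  "bb p m a u = padd p a (pmul p (pint p (int p ^ m)) u)"

lemma bb_eq: "bb p m a u n = (a n + int p ^ m * u n) mod int p ^ n"
  unfolding bb_def padd_def pmul_def pint_def
  by (simp add: mod_add_right_eq mod_mult_left_eq)

lemma padic_cong: "u \<in> padic p \<Longrightarrow> [u (Suc n) = u n] (mod int p ^ n)"
  unfolding padic_def cong_def by auto

lemma S_props:
  assumes p: "prime p" and a: "a \<in> padic p"
  shows "i \<le> m \<Longrightarrow> (\<forall>n. \<exists>c Q. Sp p m a i n = [:c:] + smult (int p ^ (m - i)) Q)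
     \<and> (\<forall>n. pcong (int p ^ n) (Sp p m a i (Suc n)) (Sp p m a i n))
     \<and> (\<forall>u n. u \<in> padic p \<longrightarrow> (pdelta p ^^ i) (bb p m a u) n = poly (Sp p m a i n) (u n) mod int p ^ n)"
proof (induction i)
  case 0
  have A: "\<forall>n. \<exists>c Q. Sp p m a 0 n = [:c:] + smult (int p ^ (m - 0)) Q"
  proof
    fix n show "\<exists>c Q. Sp p m a 0 n = [:c:] + smult (int p ^ (m - 0)) Q"
      by (rule exI[of _ "a n"], rule exI[of _ "[:0, 1:]"]) simp
  qed
  have B: "\<forall>n. pcong (int p ^ n) (Sp p m a 0 (Suc n)) (Sp p m a 0 n)"
  proof
    fix n
    have "a (Suc n) mod int p ^ n = a n" using a unfolding padic_def by auto
    then have e: "a (Suc n) - a n = int p ^ n * (a (Suc n) div int p ^ n)"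
      by (metis minus_mod_eq_mult_div)
    have "Sp p m a 0 (Suc n) - Sp p m a 0 n = [:a (Suc n) - a n:]" by simp
    also have "\<dots> = smult (int p ^ n) [:a (Suc n) div int p ^ n:]" using e by simp
    finally show "pcong (int p ^ n) (Sp p m a 0 (Suc n)) (Sp p m a 0 n)"
      unfolding pcong_def by blast
  qed
  have C: "\<forall>u n. u \<in> padic p \<longrightarrow> (pdelta p ^^ 0) (bb p m a u) n = poly (Sp p m a 0 n) (u n) mod int p ^ n"
    by (simp add: bb_eq algebra_simps)
  show ?case using A B C by blast
next
  case (Suc i)
  then have IH: "(\<forall>n. \<exists>c Q. Sp p m a i n = [:c:] + smult (int p ^ (m - i)) Q)
     \<and> (\<forall>n. pcong (int p ^ n) (Sp p m a i (Suc n)) (Sp p m a i n))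
     \<and> (\<forall>u n. u \<in> padic p \<longrightarrow> (pdelta p ^^ i) (bb p m a u) n = poly (Sp p m a i n) (u n) mod int p ^ n)"
    using Suc.IH Suc.prems by (meson Suc_leD)
  have p0: "int p \<noteq> 0" "int p > 0" using p prime_gt_0_nat by auto
  have k1: "m - i \<ge> 1" using Suc.prems by simp
  have mk: "m - Suc i = m - i - 1" by simp
  have SM: "\<forall>n. smult (int p) (Sp p m a (Suc i) n) = Sp p m a i (Suc n) - Sp p m a i (Suc n) ^ p
     \<and> (\<exists>c Q. Sp p m a (Suc i) n = [:c:] + smult (int p ^ (m - Suc i)) Q)"
  proof
    fix n
    obtain c Q where cQ: "Sp p m a i (Suc n) = [:c:] + smult (int p ^ (m - i)) Q" using IH by blast
    obtain c' Q' where E: "Sp p m a i (Suc n) - Sp p m a i (Suc n) ^ p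
        = smult (int p) ([:c':] + smult (int p ^ (m - i - 1)) Q')"
      using key_step[OF p k1 cQ] by blast
    have D: "Sp p m a (Suc i) n = [:c':] + smult (int p ^ (m - i - 1)) Q'"
      using E map_div_smult[OF p0(1)] by simp
    show "smult (int p) (Sp p m a (Suc i) n) = Sp p m a i (Suc n) - Sp p m a i (Suc n) ^ p
     \<and> (\<exists>c Q. Sp p m a (Suc i) n = [:c:] + smult (int p ^ (m - Suc i)) Q)"
    proof
      show "smult (int p) (Sp p m a (Suc i) n) = Sp p m a i (Suc n) - Sp p m a i (Suc n) ^ p"
        by (simp only: D E)
      show "\<exists>c Q. Sp p m a (Suc i) n = [:c:] + smult (int p ^ (m - Suc i)) Q"
        using D unfolding mk by blast
    qed
  qed
  have B: "\<forall>n. pcong (int p ^ n) (Sp p m a (Suc i) (Suc n)) (Sp p m a (Suc i) n)"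
  proof
    fix n
    have "pcong (int p ^ Suc n) (Sp p m a i (Suc (Suc n))) (Sp p m a i (Suc n))" using IH by blast
    then have "pcong (int p ^ Suc n) (Sp p m a i (Suc (Suc n)) - Sp p m a i (Suc (Suc n)) ^ p)
        (Sp p m a i (Suc n) - Sp p m a i (Suc n) ^ p)"
      by (intro pcong_diff pcong_power)
    then have "pcong (int p * int p ^ n) (smult (int p) (Sp p m a (Suc i) (Suc n)))
        (smult (int p) (Sp p m a (Suc i) n))"
      using SM by simp
    then show "pcong (int p ^ n) (Sp p m a (Suc i) (Suc n)) (Sp p m a (Suc i) n)"
      using pcong_cancel p0 by blast
  qed
  have C: "\<forall>u n. u \<in> padic p \<longrightarrow> (pdelta p ^^ Suc i) (bb p m a u) n = poly (Sp p m a (Suc i) n) (u n) mod int p ^ n"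
  proof (intro allI impI)
    fix u n assume u: "u \<in> padic p"
    define S where "S = Sp p m a i (Suc n)"
    define D where "D = Sp p m a (Suc i) n"
    define x where "x = u (Suc n)"
    define M where "M = int p ^ Suc n"
    define c where "c = (pdelta p ^^ i) (bb p m a u) (Suc n)"
    define y where "y = poly S x"
    have c: "c = y mod M" using IH u unfolding c_def y_def S_def x_def M_def by blast
    have "[c = y] (mod M)" using c by (simp add: cong_def)
    then have "[c - c ^ p = y - y ^ p] (mod M)" by (intro cong_diff cong_pow)
    then have e1: "(c - c ^ p) mod M = (y - y ^ p) mod M" by (simp add: cong_def)
    have "y - y ^ p = poly (S - S ^ p) x" by (simp add: y_def)
    also have "S - S ^ p = smult (int p) D" using SM unfolding S_def D_def by simp
    finally have e2: "y - y ^ p = int p * poly D x" by simp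
    have "(int p * poly D x) mod M = int p * (poly D x mod int p ^ n)"
      unfolding M_def by (simp add: mod_mult_mult1)
    then have e3: "(c - c ^ p) mod M div int p = poly D x mod int p ^ n"
      using e1 e2 p0 by simp
    have "[x = u n] (mod int p ^ n)" unfolding x_def by (rule padic_cong[OF u])
    then have "[poly D x = poly D (u n)] (mod int p ^ n)" by (rule poly_cong)
    then have e4: "poly D x mod int p ^ n = poly D (u n) mod int p ^ n" by (simp add: cong_def)
    have "(pdelta p ^^ Suc i) (bb p m a u) n = (c - c ^ p) mod M div int p"
      by (simp add: pdelta_def c_def M_def)
    then show "(pdelta p ^^ Suc i) (bb p m a u) n = poly (Sp p m a (Suc i) n) (u n) mod int p ^ n"
      using e3 e4 D_def by simp
  qed
  show ?case using SM B C by blast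
qed



lemma finite_A: "finite {\<alpha>\<in>multi_idx m. mdeg m \<alpha> < N}"
proof -
  let ?E = "(\<lambda>g. \<lambda>i. if i \<le> m then g i else 0) ` (PiE {..m} (\<lambda>_. {..<N}))"
  have "finite ?E" by (intro finite_imageI finite_PiE) auto
  moreover have "{\<alpha>\<in>multi_idx m. mdeg m \<alpha> < N} \<subseteq> ?E"
  proof
    fix \<alpha> assume h: "\<alpha> \<in> {\<alpha>\<in>multi_idx m. mdeg m \<alpha> < N}"
    have le: "\<alpha> i < N" if "i \<le> m" for i
    proof -
      have "\<alpha> i \<le> (\<Sum>i\<le>m. \<alpha> i)" using that by (intro member_le_sum) auto
      then show ?thesis using h by (simp add: mdeg_def)
    qed
    have "restrict \<alpha> {..m} \<in> PiE {..m} (\<lambda>_. {..<N})" using le by auto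
    moreover have "\<alpha> = (\<lambda>i. if i \<le> m then restrict \<alpha> {..m} i else 0)"
      using h by (auto simp: multi_idx_def)
    ultimately show "\<alpha> \<in> ?E" by blast
  qed
  ultimately show ?thesis by (rule finite_subset[rotated])
qed

lemma bb_padic: assumes "prime p" "a \<in> padic p" "u \<in> padic p" shows "bb p m a u \<in> padic p"
proof -
  have p0: "int p > 0" using assms prime_gt_0_nat by auto
  have "bb p m a u (Suc n) mod int p ^ n = bb p m a u n" for n
  proof -
    have "bb p m a u (Suc n) mod int p ^ n = (a (Suc n) + int p ^ m * u (Suc n)) mod int p ^ n"
      unfolding bb_eq by (simp add: mod_mod_cancel)
    also have "\<dots> = (a n + int p ^ m * u n) mod int p ^ n"
    proof -
      have "[a (Suc n) + int p ^ m * u (Suc n) = a n + int p ^ m * u n] (mod int p ^ n)"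
        using padic_cong[OF assms(2), of n] padic_cong[OF assms(3), of n]
        by (intro cong_add cong_mult cong_refl)
      then show ?thesis by (simp add: cong_def)
    qed
    finally show ?thesis by (simp add: bb_eq)
  qed
  then show ?thesis unfolding padic_def using p0 by (auto simp: bb_eq)
qed



theorem theorem1p4:
  fixes p m :: nat and f :: "padic_int \<Rightarrow> padic_int"
  assumes "prime p"
    and "\<forall>a\<in>padic p. f a \<in> padic p"
    and "arith_diff_op p m f"
  shows "analytic_level p m f"
  unfolding analytic_level_def
proof
  fix a assume a: "a \<in> padic p"
  have p: "prime p" by fact
  have p0: "int p > 0" using p prime_gt_0_nat by auto
  obtain F where Fr: "restricted p m F"
    and Fs: "\<forall>a\<in>padic p. ps_sums p m F (\<lambda>i. (pdelta p ^^ i) a) (f a)"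
    using assms(3) unfolding arith_diff_op_def by blast
  have Fpad: "F \<alpha> \<in> padic p" if "\<alpha> \<in> multi_idx m" for \<alpha>
    using Fr that unfolding restricted_def by blast
  define K where "K n = (SOME N. \<forall>\<alpha>\<in>multi_idx m. mdeg m \<alpha> \<ge> N \<longrightarrow> F \<alpha> n = 0)" for n
  have K: "\<forall>\<alpha>\<in>multi_idx m. mdeg m \<alpha> \<ge> K n \<longrightarrow> F \<alpha> n = 0" for n
  proof -
    have "\<exists>N. \<forall>\<alpha>\<in>multi_idx m. mdeg m \<alpha> \<ge> N \<longrightarrow> F \<alpha> n = 0"
      using Fr unfolding restricted_def by blast
    then show ?thesis unfolding K_def by (rule someI_ex)
  qed
  define A where "A N = {\<alpha>\<in>multi_idx m. mdeg m \<alpha> < N}" for N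
  have finA: "finite (A N)" for N unfolding A_def by (rule finite_A)
  define T where "T n \<alpha> = smult (F \<alpha> n) (\<Prod>i\<le>m. Sp p m a i n ^ \<alpha> i)" for n \<alpha>
  define RR where "RR n N = (\<Sum>\<alpha>\<in>A N. T n \<alpha>)" for n N
  define R where "R n = RR n (K n)" for n
  have RR_K: "RR n N = R n" if "N \<ge> K n" for n N
  proof -
    have "RR n N = (\<Sum>\<alpha>\<in>A (K n). T n \<alpha>)" unfolding RR_def
    proof (rule sum.mono_neutral_right[OF finA])
      show "A (K n) \<subseteq> A N" using that unfolding A_def by auto
      show "\<forall>\<alpha>\<in>A N - A (K n). T n \<alpha> = 0" using K unfolding A_def T_def by auto
    qed
    then show ?thesis unfolding R_def RR_def .
  qed
  have SP: "\<And>i. i \<le> m \<Longrightarrow> (\<forall>n. pcong (int p ^ n) (Sp p m a i (Suc n)) (Sp p m a i n))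
     \<and> (\<forall>u n. u \<in> padic p \<longrightarrow> (pdelta p ^^ i) (bb p m a u) n = poly (Sp p m a i n) (u n) mod int p ^ n)"
    using S_props[OF p a] by blast
  have Rcong: "pcong (int p ^ n) (R (Suc n)) (R n)" for n
  proof -
    define N where "N = max (K n) (K (Suc n))"
    have "pcong (int p ^ n) (RR (Suc n) N) (RR n N)" unfolding RR_def
    proof (rule pcong_sum)
      fix \<alpha> assume h: "\<alpha> \<in> A N"
      then have am: "\<alpha> \<in> multi_idx m" unfolding A_def by auto
      have "pcong (int p ^ n) (\<Prod>i\<le>m. Sp p m a i (Suc n) ^ \<alpha> i) (\<Prod>i\<le>m. Sp p m a i n ^ \<alpha> i)"
        using SP by (intro pcong_prod pcong_power) auto
      then have "pcong (int p ^ n) (T (Suc n) \<alpha>) (smult (F \<alpha> (Suc n)) (\<Prod>i\<le>m. Sp p m a i n ^ \<alpha> i))"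
        unfolding T_def by (rule pcong_smult)
      moreover have "pcong (int p ^ n) (smult (F \<alpha> (Suc n)) (\<Prod>i\<le>m. Sp p m a i n ^ \<alpha> i)) (T n \<alpha>)"
        unfolding T_def by (rule pcong_smult2[OF padic_cong[OF Fpad[OF am]]])
      ultimately show "pcong (int p ^ n) (T (Suc n) \<alpha>) (T n \<alpha>)" by (rule pcong_trans)
    qed
    then show ?thesis using RR_K[of n N] RR_K[of "Suc n" N] unfolding N_def by simp
  qed
  define G where "G \<beta> n = coeff (R n) (\<beta> 0) mod int p ^ n" for \<beta> :: "nat \<Rightarrow> nat" and n
  have mdeg0: "mdeg 0 \<beta> = \<beta> 0" for \<beta> by (simp add: mdeg_def)
  have Gpad: "G \<beta> \<in> padic p" for \<beta>
    unfolding padic_def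
  proof (intro CollectI allI conjI)
    fix n
    show "0 \<le> G \<beta> n" "G \<beta> n < int p ^ n" unfolding G_def using p0 by auto
    have "G \<beta> (Suc n) mod int p ^ n = coeff (R (Suc n)) (\<beta> 0) mod int p ^ n"
      unfolding G_def by (simp add: mod_mod_cancel)
    also have "\<dots> = coeff (R n) (\<beta> 0) mod int p ^ n"
      using pcong_coeff[OF Rcong[of n]] by (simp add: cong_def)
    finally show "G \<beta> (Suc n) mod int p ^ n = G \<beta> n" unfolding G_def .
  qed
  have Gr: "restricted p 0 G"
    unfolding restricted_def
  proof (intro conjI ballI allI)
    fix n
    show "\<exists>N. \<forall>\<alpha>\<in>multi_idx 0. N \<le> mdeg 0 \<alpha> \<longrightarrow> G \<alpha> n = 0"
      by (rule exI[of _ "Suc (degree (R n))"]) (auto simp: mdeg0 G_def coeff_eq_0)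
  qed (rule Gpad)
  show "\<exists>G. restricted p 0 G \<and>
       (\<forall>u\<in>padic p. ps_sums p 0 G (\<lambda>_. u) (f (padd p a (pmul p (pint p (int p ^ m)) u))))"
  proof (intro exI conjI ballI)
    show "restricted p 0 G" by (rule Gr)
    fix u assume u: "u \<in> padic p"
    define b where "b = bb p m a u"
    have b: "b \<in> padic p" unfolding b_def by (rule bb_padic[OF p a u])
    have fb: "f (padd p a (pmul p (pint p (int p ^ m)) u)) = f b" unfolding b_def bb_def ..
    show "ps_sums p 0 G (\<lambda>_. u) (f (padd p a (pmul p (pint p (int p ^ m)) u)))"
      unfolding fb ps_sums_def
    proof (intro conjI allI)
      show "f b \<in> padic p" using assms(2) b by blast
      fix n
      define M where "M = int p ^ n"
      have fbR: "f b n = poly (R n) (u n) mod M"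
      proof -
        obtain N0 where N0: "\<forall>N'\<ge>N0. f b n = ps_partial p m F (\<lambda>i. (pdelta p ^^ i) b) N' n"
          using Fs b unfolding ps_sums_def by blast
        define N1 where "N1 = max N0 (K n)"
        have "f b n = (\<Sum>\<alpha>\<in>A N1. F \<alpha> n * (\<Prod>i\<le>m. (pdelta p ^^ i) b n ^ \<alpha> i)) mod M"
          using N0 unfolding N1_def ps_partial_def A_def M_def by auto
        also have "\<dots> = (\<Sum>\<alpha>\<in>A N1. F \<alpha> n * (\<Prod>i\<le>m. poly (Sp p m a i n) (u n) ^ \<alpha> i)) mod M"
        proof -
          have "[(\<Sum>\<alpha>\<in>A N1. F \<alpha> n * (\<Prod>i\<le>m. (pdelta p ^^ i) b n ^ \<alpha> i))
              = (\<Sum>\<alpha>\<in>A N1. F \<alpha> n * (\<Prod>i\<le>m. poly (Sp p m a i n) (u n) ^ \<alpha> i))] (mod M)"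
          proof (intro cong_sum cong_mult cong_refl cong_prod cong_pow)
            fix i assume "i \<in> {..m}"
            then have "(pdelta p ^^ i) b n = poly (Sp p m a i n) (u n) mod M"
              using SP u unfolding b_def M_def by auto
            then show "[(pdelta p ^^ i) b n = poly (Sp p m a i n) (u n)] (mod M)"
              by (simp add: cong_def)
          qed
          then show ?thesis by (simp add: cong_def)
        qed
        also have "(\<Sum>\<alpha>\<in>A N1. F \<alpha> n * (\<Prod>i\<le>m. poly (Sp p m a i n) (u n) ^ \<alpha> i)) = poly (RR n N1) (u n)"
          unfolding RR_def T_def by (simp add: poly_sum poly_prod poly_power)
        also have "RR n N1 = R n" using RR_K N1_def by simp
        finally show ?thesis .
      qed
      show "\<exists>N. \<forall>N'\<ge>N. f b n = ps_partial p 0 G (\<lambda>_. u) N' n"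
      proof (intro exI allI impI)
        fix N' assume N': "Suc (degree (R n)) \<le> N'"
        have "(\<Sum>\<beta>\<in>{\<beta>\<in>multi_idx 0. mdeg 0 \<beta> < N'}. G \<beta> n * (\<Prod>i\<le>0. u n ^ \<beta> i))
            = (\<Sum>j<N'. (coeff (R n) j mod M) * u n ^ j)"
        proof (rule sum.reindex_bij_witness[where j="\<lambda>\<beta>. \<beta> 0" and i="\<lambda>j. \<lambda>k. if k = 0 then j else 0"])
          fix \<beta> assume "\<beta> \<in> {\<beta>\<in>multi_idx 0. mdeg 0 \<beta> < N'}"
          then show "(\<lambda>k. if k = 0 then \<beta> 0 else 0) = \<beta>" by (auto simp: multi_idx_def)
        qed (auto simp: multi_idx_def mdeg0 G_def M_def)
        also have "[\<dots> = (\<Sum>j<N'. coeff (R n) j * u n ^ j)] (mod M)"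
          by (intro cong_sum cong_mult cong_refl) (simp add: cong_def)
        also have "(\<Sum>j<N'. coeff (R n) j * u n ^ j) = (\<Sum>j\<le>degree (R n). coeff (R n) j * u n ^ j)"
          by (rule sum.mono_neutral_right) (use N' in \<open>auto simp: coeff_eq_0\<close>)
        also have "\<dots> = poly (R n) (u n)" by (simp add: poly_altdef)
        finally have "[(\<Sum>\<beta>\<in>{\<beta>\<in>multi_idx 0. mdeg 0 \<beta> < N'}. G \<beta> n * (\<Prod>i\<le>0. u n ^ \<beta> i))
            = poly (R n) (u n)] (mod M)" .
        then show "f b n = ps_partial p 0 G (\<lambda>_. u) N' n"
          unfolding ps_partial_def fbR M_def by (simp add: cong_def)
      qed
    qed
  qed
qed

end
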